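(* Let $v_1,v_2,\rho_1,\rho_2$ be strictly positive reals, define $V(R)=(\rho_1+\rho_2R)\big(v_1+\frac{v_2}{R}\big)$ for $R>0$, let $R^*=\sqrt{\frac{\rho_1 v_2}{\rho_2 v_1}}$ and $\gamma^*=V(R^* )/V(1)$. Suppose $R^*>1$ and $\alpha^{-1}R^*\le R\le\alpha R^*$ for some $\alpha>1$. Then \[ \frac{V(R)}{V(R^* )}\le\frac12+\frac{\alpha+\alpha^{-1}}{4},\qquad\text{and thus}\qquad \frac{V(R)}{V(1)}\le\Big(\frac12+\frac{\alpha+\alpha^{-1}}{4}\Big)\gamma^*. \]
   Context: Interpretation: for a nested conditional Monte Carlo estimator with $N$ outer paths and $R$ inner replications per path, with variance $\frac{v_1}{N}+\frac{v_2}{RN}$ and expected cost $N\rho_1+NR\rho_2$, at a fixed budget $C$ fully used the variance is $V(R)/C$; $R^*$ is the optimal number of inner replications (when $R^*>1$) and $R=1$ corresponds to simple Monte Carlo. *)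

theory Defs
  imports Complex_Main
begin

definition nested_V :: "real \<Rightarrow> real \<Rightarrow> real \<Rightarrow> real \<Rightarrow> real \<Rightarrow> real" where
  "nested_V v1 v2 \<rho>1 \<rho>2 R = (\<rho>1 + \<rho>2 * R) * (v1 + v2 / R)"

definition R_star :: "real \<Rightarrow> real \<Rightarrow> real \<Rightarrow> real \<Rightarrow> real" where
  "R_star v1 v2 \<rho>1 \<rho>2 = sqrt ((\<rho>1 * v2) / (\<rho>2 * v1))"

end

theory Submission
  imports Defs
begin

theorem proposition4:
  fixes v1 v2 \<rho>1 \<rho>2 \<alpha> R :: real
  assumes "v1 > 0" and "v2 > 0" and "\<rho>1 > 0" and "\<rho>2 > 0"
    and "R_star v1 v2 \<rho>1 \<rho>2 > 1"
    and "\<alpha> > 1"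
    and "R_star v1 v2 \<rho>1 \<rho>2 / \<alpha> \<le> R" and "R \<le> \<alpha> * R_star v1 v2 \<rho>1 \<rho>2"
  shows "nested_V v1 v2 \<rho>1 \<rho>2 R / nested_V v1 v2 \<rho>1 \<rho>2 (R_star v1 v2 \<rho>1 \<rho>2)
           \<le> 1/2 + (\<alpha> + inverse \<alpha>) / 4 \<and>
         nested_V v1 v2 \<rho>1 \<rho>2 R / nested_V v1 v2 \<rho>1 \<rho>2 1
           \<le> (1/2 + (\<alpha> + inverse \<alpha>) / 4) *
              (nested_V v1 v2 \<rho>1 \<rho>2 (R_star v1 v2 \<rho>1 \<rho>2) / nested_V v1 v2 \<rho>1 \<rho>2 1)"
proof -
  note a = assms
  define S where "S = R_star v1 v2 \<rho>1 \<rho>2"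
  have S0: "S > 0" using a(5) S_def by simp
  have SS: "S^2 = (\<rho>1 * v2) / (\<rho>2 * v1)" unfolding S_def R_star_def
    using a by (simp add: real_sqrt_pow2 less_imp_le)
  have key: "\<rho>2 * v1 * S^2 = \<rho>1 * v2" using SS a by (simp add: field_simps)
  define A where "A = \<rho>1 * v1 + \<rho>2 * v2"
  define B where "B = \<rho>2 * v1 * S"
  have B0: "B > 0" using a S0 B_def by simp
  have R0: "R > 0" using a(7) S0 a(6) S_def by (smt (verit) divide_pos_pos)
  have VR: "nested_V v1 v2 \<rho>1 \<rho>2 R = A + B * (R/S + S/R)"
  proof -
    have "nested_V v1 v2 \<rho>1 \<rho>2 R = A + \<rho>1 * v2 / R + \<rho>2 * v1 * R"
      unfolding nested_V_def A_def using R0 by (simp add: field_simps)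
    also have "\<rho>1 * v2 / R = B * (S/R)" using key B_def by (simp add: power2_eq_square)
    also have "\<rho>2 * v1 * R = B * (R/S)" using B_def S0 by simp
    finally show ?thesis by (simp add: algebra_simps)
  qed
  have VS: "nested_V v1 v2 \<rho>1 \<rho>2 S = A + 2 * B"
  proof -
    have "nested_V v1 v2 \<rho>1 \<rho>2 S = A + \<rho>1 * v2 / S + \<rho>2 * v1 * S"
      unfolding nested_V_def A_def using S0 by (simp add: field_simps)
    also have "\<rho>1 * v2 / S = B" using key B_def S0 by (simp add: power2_eq_square field_simps flip: key)
    finally show ?thesis using B_def by simp
  qed
  have AB: "A - 2 * B \<ge> 0"
  proof -
    have "v2 * (A - 2 * B) / \<rho>2 = (v1 * S - v2)^2"
      unfolding A_def B_def using a key
      by (simp add: field_simps power2_eq_square)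
    moreover have "(v1 * S - v2)^2 \<ge> 0" by simp
    ultimately have "v2 * (A - 2 * B) / \<rho>2 \<ge> 0" by simp
    thus ?thesis using a by (simp add: zero_le_divide_iff zero_le_mult_iff)
  qed
  define t where "t = R/S + S/R"
  have t2: "t \<ge> 2"
  proof -
    have "R/S + S/R - 2 = (R - S)^2 / (R*S)" using R0 S0 by (simp add: field_simps power2_eq_square)
    moreover have "(R - S)^2 / (R*S) \<ge> 0" using R0 S0 by simp
    ultimately show ?thesis using t_def by simp
  qed
  have ta: "t \<le> \<alpha> + inverse \<alpha>"
  proof -
    define x where "x = R/S"
    have x0: "x > 0" using R0 S0 x_def by simp
    have x1: "x \<le> \<alpha>" using a(8) S0 x_def S_def by (simp add: divide_le_eq mult.commute)
    have "S \<le> \<alpha> * R" using a(7) a(6) S_def by (simp add: divide_le_eq mult.commute)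
    hence "S * 1 \<le> S * (\<alpha> * x)" using x_def S0 by simp
    hence x2: "1 \<le> \<alpha> * x" using S0 by (simp only: mult_le_cancel_left_pos)
    have "t = x + 1/x" using t_def x_def by simp
    moreover have "\<alpha> + inverse \<alpha> - (x + 1/x) = (\<alpha> - x) * (\<alpha> * x - 1) / (\<alpha> * x)"
      using x0 a(6) by (simp add: field_simps)
    moreover have "(\<alpha> - x) * (\<alpha> * x - 1) / (\<alpha> * x) \<ge> 0" using x1 x2 x0 a(6) by simp
    ultimately show ?thesis by simp
  qed
  have pos: "A + 2 * B > 0" using AB B0 by simp
  have main: "(A + B * t) / (A + 2 * B) \<le> 1/2 + (\<alpha> + inverse \<alpha>) / 4"
  proof -
    have "(t - 2) * (A - 2 * B) \<ge> 0" using t2 AB by simp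
    hence "A + B * t \<le> (1/2 + t/4) * (A + 2 * B)" by (simp add: algebra_simps)
    also have "\<dots> \<le> (1/2 + (\<alpha> + inverse \<alpha>) / 4) * (A + 2 * B)"
      using ta pos by (intro mult_right_mono) auto
    finally show ?thesis using pos by (simp add: divide_le_eq)
  qed
  have first: "nested_V v1 v2 \<rho>1 \<rho>2 R / nested_V v1 v2 \<rho>1 \<rho>2 S \<le> 1/2 + (\<alpha> + inverse \<alpha>) / 4"
    using main VR VS t_def by simp
  have V1: "nested_V v1 v2 \<rho>1 \<rho>2 1 > 0" unfolding nested_V_def using a by simp
  have VSp: "nested_V v1 v2 \<rho>1 \<rho>2 S > 0" using VS pos by simp
  have "nested_V v1 v2 \<rho>1 \<rho>2 R / nested_V v1 v2 \<rho>1 \<rho>2 1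
      = (nested_V v1 v2 \<rho>1 \<rho>2 R / nested_V v1 v2 \<rho>1 \<rho>2 S) * (nested_V v1 v2 \<rho>1 \<rho>2 S / nested_V v1 v2 \<rho>1 \<rho>2 1)"
    using VSp by simp
  also have "\<dots> \<le> (1/2 + (\<alpha> + inverse \<alpha>) / 4) * (nested_V v1 v2 \<rho>1 \<rho>2 S / nested_V v1 v2 \<rho>1 \<rho>2 1)"
    using first V1 VSp by (intro mult_right_mono) auto
  finally show ?thesis using first S_def by simp
qed

end
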